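(* Let $\mathcal{C}_1$ and $\mathcal{C}_2$ be two maximal commuting classes of two-qubit Pauli operators ($d=4$) that belong to a complete set of maximal commuting classes. Then there do not exist two further maximal commuting Pauli classes $\mathcal{C}_3'$ and $\mathcal{C}_4'$ (with $\mathcal{C}_1,\mathcal{C}_2,\mathcal{C}_3',\mathcal{C}_4'$ pairwise disjoint) such that the common eigenbases of $\mathcal{C}_1,\mathcal{C}_2,\mathcal{C}_3',\mathcal{C}_4'$ form a weakly unextendible set of four mutually unbiased bases in $\mathbb{C}^4$.
   Context: Two-qubit Pauli operators are the tensor products $P_1\otimes P_2$ with $P_k\in\{I,X,Y,Z\}$. A maximal commuting class in $d=4$ is a set of $3$ mutually commuting non-identity two-qubit Pauli operators. A complete set of classes is a family of $5$ pairwise disjoint maximal commuting classes whose union is the set of all $15$ non-identity two-qubit Pauli operators. Two orthonormal bases of $\mathbb{C}^d$ are mutually unbiased if $|\langle a|b\rangle|=1/\sqrt d$ for all vectors $a$ of the first and $b$ of the second; common eigenbases of pairwise disjoint maximal commuting Pauli classes are mutually unbiased. A set of mutually unbiased bases obtained as common eigenbases of Pauli classes is weakly unextendible if there is no further basis, unbiased to all of them, that is the common eigenbasis of a maximal commuting class of Pauli operators. *)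

theory Defs
  imports "Jordan_Normal_Form.Matrix"
begin

datatype pauli = PI | PX | PY | PZ

definition pauli_mat :: "pauli \<Rightarrow> complex mat" where
  "pauli_mat p = (case p of
      PI \<Rightarrow> mat_of_rows_list 2 [[1, 0], [0, 1]]
    | PX \<Rightarrow> mat_of_rows_list 2 [[0, 1], [1, 0]]
    | PY \<Rightarrow> mat_of_rows_list 2 [[0, - \<i>], [\<i>, 0]]
    | PZ \<Rightarrow> mat_of_rows_list 2 [[1, 0], [0, -1]])"

text \<open>Kronecker (tensor) product of two 2x2 matrices, basis |ab> indexed by 2a+b.\<close>
definition kron2 :: "complex mat \<Rightarrow> complex mat \<Rightarrow> complex mat" where
  "kron2 A B = mat 4 4 (\<lambda>(i, j). A $$ (i div 2, j div 2) * B $$ (i mod 2, j mod 2))"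

definition two_qubit_pauli :: "pauli \<Rightarrow> pauli \<Rightarrow> complex mat" where
  "two_qubit_pauli p q = kron2 (pauli_mat p) (pauli_mat q)"

definition nonid_paulis :: "complex mat set" where
  "nonid_paulis = {two_qubit_pauli p q | p q. (p, q) \<noteq> (PI, PI)}"

definition commute :: "complex mat \<Rightarrow> complex mat \<Rightarrow> bool" where
  "commute A B \<longleftrightarrow> A * B = B * A"

definition max_comm_class :: "complex mat set \<Rightarrow> bool" where
  "max_comm_class C \<longleftrightarrow> C \<subseteq> nonid_paulis \<and> card C = 3 \<and>
     (\<forall>A\<in>C. \<forall>B\<in>C. commute A B)"

definition complete_set :: "complex mat set set \<Rightarrow> bool" where
  "complete_set F \<longleftrightarrow> card F = 5 \<and> (\<forall>C\<in>F. max_comm_class C) \<and>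
     (\<forall>C\<in>F. \<forall>D\<in>F. C \<noteq> D \<longrightarrow> C \<inter> D = {}) \<and> \<Union>F = nonid_paulis"

definition braket :: "complex vec \<Rightarrow> complex vec \<Rightarrow> complex" where
  "braket a b = (\<Sum>i<4. cnj (a $ i) * b $ i)"

definition onb4 :: "complex vec set \<Rightarrow> bool" where
  "onb4 B \<longleftrightarrow> card B = 4 \<and> (\<forall>v\<in>B. dim_vec v = 4) \<and>
     (\<forall>a\<in>B. \<forall>b\<in>B. braket a b = (if a = b then 1 else 0))"

definition eigenvector :: "complex mat \<Rightarrow> complex vec \<Rightarrow> bool" where
  "eigenvector A v \<longleftrightarrow> v \<noteq> 0\<^sub>v (dim_vec v) \<and> (\<exists>c. A *\<^sub>v v = c \<cdot>\<^sub>v v)"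

definition common_eigenbasis :: "complex mat set \<Rightarrow> complex vec set \<Rightarrow> bool" where
  "common_eigenbasis C B \<longleftrightarrow> onb4 B \<and> (\<forall>v\<in>B. \<forall>A\<in>C. eigenvector A v)"

definition unbiased :: "complex vec set \<Rightarrow> complex vec set \<Rightarrow> bool" where
  "unbiased B1 B2 \<longleftrightarrow> onb4 B1 \<and> onb4 B2 \<and>
     (\<forall>a\<in>B1. \<forall>b\<in>B2. cmod (braket a b) = 1 / sqrt 4)"

definition weakly_unextendible :: "complex vec set set \<Rightarrow> bool" where
  "weakly_unextendible Bs \<longleftrightarrow>
     \<not> (\<exists>C B. max_comm_class C \<and> common_eigenbasis C B \<and> B \<notin> Bs \<and>
            (\<forall>B'\<in>Bs. unbiased B B'))"

end

theory Submission
  imports Defs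
begin

type_synonym lab = "pauli \<times> pauli"

fun spm :: "pauli \<Rightarrow> nat \<Rightarrow> nat \<Rightarrow> complex" where
  "spm PI a b = (if a = b then 1 else 0)"
| "spm PX a b = (if a = b then 0 else 1)"
| "spm PY a b = (if a = b then 0 else if a = 0 then - \<i> else \<i>)"
| "spm PZ a b = (if a = b then (if a = 0 then 1 else -1) else 0)"

lemma less2: "(a::nat) < 2 \<longleftrightarrow> a = 0 \<or> a = 1" by auto
lemma less4: "(a::nat) < 4 \<longleftrightarrow> a = 0 \<or> a = 1 \<or> a = 2 \<or> a = 3" by auto
lemma sum4: "(\<Sum>k<(4::nat). f k) = f 0 + f 1 + f 2 + (f 3 :: 'a::comm_monoid_add)"
  by (simp add: eval_nat_numeral)
lemma sum2: "(\<Sum>k<(2::nat). f k) = f 0 + (f 1 :: 'a::comm_monoid_add)"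
  by (simp add: eval_nat_numeral)
lemma ex4: "(\<exists>i<4. P i) \<longleftrightarrow> P 0 \<or> P 1 \<or> P 2 \<or> P (3::nat)"
  using less4 by auto
lemma ex2: "(\<exists>i<2. P i) \<longleftrightarrow> P 0 \<or> P (1::nat)"
  using less2 by auto

lemma pauli_mat_idx: "a < 2 \<Longrightarrow> b < 2 \<Longrightarrow> pauli_mat p $$ (a,b) = spm p a b"
  by (cases p; auto simp: pauli_mat_def mat_of_rows_list_def less_2_cases_iff)

definition M :: "lab \<Rightarrow> complex mat" where
  "M x = two_qubit_pauli (fst x) (snd x)"

definition ent :: "lab \<Rightarrow> nat \<Rightarrow> nat \<Rightarrow> complex" where
  "ent x i j = spm (fst x) (i div 2) (j div 2) * spm (snd x) (i mod 2) (j mod 2)"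

lemma dimM[simp]: "dim_row (M x) = 4" "dim_col (M x) = 4"
  by (simp_all add: M_def two_qubit_pauli_def kron2_def)

lemma M_idx: "i < 4 \<Longrightarrow> j < 4 \<Longrightarrow> M x $$ (i,j) = ent x i j"
  by (simp add: M_def two_qubit_pauli_def kron2_def ent_def pauli_mat_idx)

definition ap :: "lab \<Rightarrow> complex vec \<Rightarrow> complex vec" where
  "ap x v = vec 4 (\<lambda>i. \<Sum>j<4. ent x i j * v $ j)"

lemma M_v: "dim_vec v = 4 \<Longrightarrow> M x *\<^sub>v v = ap x v"
  by (rule eq_vecI) (auto simp: ap_def scalar_prod_def M_idx lessThan_atLeast0)

definition sp :: "pauli \<Rightarrow> pauli \<Rightarrow> nat \<Rightarrow> nat \<Rightarrow> complex" where
  "sp p q a b = (\<Sum>k<2. spm p a k * spm q k b)"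

lemma prod4: "i < 4 \<Longrightarrow> j < 4 \<Longrightarrow> (\<Sum>k<4. ent x i k * ent y k j) =
   sp (fst x) (fst y) (i div 2) (j div 2) * sp (snd x) (snd y) (i mod 2) (j mod 2)"
  unfolding less4 sum4 sp_def sum2 ent_def
  by (elim disjE; simp; simp add: algebra_simps)

definition anti :: "pauli \<Rightarrow> pauli \<Rightarrow> bool" where
  "anti p q \<longleftrightarrow> p \<noteq> PI \<and> q \<noteq> PI \<and> p \<noteq> q"

definition lcomm :: "lab \<Rightarrow> lab \<Rightarrow> bool" where
  "lcomm x y \<longleftrightarrow> (anti (fst x) (fst y) \<longleftrightarrow> anti (snd x) (snd y))"

fun pm :: "pauli \<Rightarrow> pauli \<Rightarrow> pauli" where
  "pm PI q = q" | "pm p PI = p"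
| "pm PX PX = PI" | "pm PY PY = PI" | "pm PZ PZ = PI"
| "pm PX PY = PZ" | "pm PY PX = PZ" | "pm PY PZ = PX" | "pm PZ PY = PX"
| "pm PZ PX = PY" | "pm PX PZ = PY"

fun om :: "pauli \<Rightarrow> pauli \<Rightarrow> complex" where
  "om PX PY = \<i>" | "om PY PX = - \<i>" | "om PY PZ = \<i>" | "om PZ PY = - \<i>"
| "om PZ PX = \<i>" | "om PX PZ = - \<i>" | "om _ _ = 1"

lemma sp_om: "a < 2 \<Longrightarrow> b < 2 \<Longrightarrow> sp p q a b = om p q * spm (pm p q) a b"
  unfolding less2 sp_def sum2 by (cases p; cases q; auto)

lemma sp_swap: "a < 2 \<Longrightarrow> b < 2 \<Longrightarrow> sp p q a b = (if anti p q then -1 else 1) * sp q p a b"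
  unfolding less2 sp_def sum2 anti_def by (cases p; cases q; auto)

lemma om_nz: "om p q \<noteq> 0" by (cases p; cases q; auto)
lemma spm_nz: "\<exists>a<2. \<exists>b<2. spm r a b \<noteq> 0"
  unfolding ex2 by (cases r; auto)

definition lmul :: "lab \<Rightarrow> lab \<Rightarrow> lab" where
  "lmul x y = (pm (fst x) (fst y), pm (snd x) (snd y))"

lemma ent_inj: "x \<noteq> y \<Longrightarrow> \<exists>i<4. \<exists>j<4. ent x i j \<noteq> ent y i j"
  unfolding ex4 ent_def
  by (cases x; cases y; rename_tac a b c d; case_tac a; case_tac b; case_tac c; case_tac d; simp)



lemma M_mult_idx: "i < 4 \<Longrightarrow> j < 4 \<Longrightarrow> (M x * M y) $$ (i,j) =
   sp (fst x) (fst y) (i div 2) (j div 2) * sp (snd x) (snd y) (i mod 2) (j mod 2)"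
  by (simp add: scalar_prod_def M_idx lessThan_atLeast0[symmetric] prod4)

lemma sp_anti: "\<not> lcomm x y \<Longrightarrow> a < 2 \<Longrightarrow> b < 2 \<Longrightarrow> c < 2 \<Longrightarrow> d < 2 \<Longrightarrow>
  sp (fst x) (fst y) a b * sp (snd x) (snd y) c d = - (sp (fst y) (fst x) a b * sp (snd y) (snd x) c d)"
  by (simp add: lcomm_def sp_swap[of _ _ "fst x"] sp_swap[of _ _ "snd x"] split: if_splits)

lemma sp_comm: "lcomm x y \<Longrightarrow> a < 2 \<Longrightarrow> b < 2 \<Longrightarrow> c < 2 \<Longrightarrow> d < 2 \<Longrightarrow>
  sp (fst x) (fst y) a b * sp (snd x) (snd y) c d = sp (fst y) (fst x) a b * sp (snd y) (snd x) c d"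
  by (simp add: lcomm_def sp_swap[of _ _ "fst x"] sp_swap[of _ _ "snd x"] split: if_splits)

lemma commute_iff: "commute (M x) (M y) \<longleftrightarrow> lcomm x y"
proof
  assume lc: "lcomm x y"
  show "commute (M x) (M y)" unfolding commute_def
  proof (rule eq_matI)
    fix i j assume ij: "i < dim_row (M y * M x)" "j < dim_col (M y * M x)"
    hence ij4: "i < 4" "j < 4" by auto
    show "(M x * M y) $$ (i, j) = (M y * M x) $$ (i, j)"
      unfolding M_mult_idx[OF ij4] using ij4 by (intro sp_comm[OF lc]) auto
  qed auto
next
  assume c: "commute (M x) (M y)"
  show "lcomm x y"
  proof (rule ccontr)
    assume n: "\<not> lcomm x y"
    obtain a b where ab: "a < 2" "b < 2" "spm (pm (fst x) (fst y)) a b \<noteq> 0" using spm_nz by blast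
    obtain c d where cd: "c < 2" "d < 2" "spm (pm (snd x) (snd y)) c d \<noteq> 0" using spm_nz by blast
    have i: "2*a+c < 4" "2*b+d < 4" using ab cd by auto
    have dm: "(2*a+c) div 2 = a" "(2*b+d) div 2 = b" "(2*a+c) mod 2 = c" "(2*b+d) mod 2 = d"
      using ab cd by auto
    have "(M x * M y) $$ (2*a+c, 2*b+d) = (M y * M x) $$ (2*a+c, 2*b+d)"
      using c by (simp add: commute_def)
    hence "sp (fst x) (fst y) a b * sp (snd x) (snd y) c d = sp (fst y) (fst x) a b * sp (snd y) (snd x) c d"
      unfolding M_mult_idx[OF i] dm .
    hence "sp (fst x) (fst y) a b * sp (snd x) (snd y) c d = 0"
      using sp_anti[OF n ab(1,2) cd(1,2)] by simp
    thus False using ab cd by (simp add: sp_om om_nz)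
  qed
qed

lemma M_inj: "inj M"
proof (rule injI)
  fix x y assume e: "M x = M y"
  show "x = y"
  proof (rule ccontr)
    assume "x \<noteq> y"
    then obtain i j where "i < 4" "j < 4" "ent x i j \<noteq> ent y i j" using ent_inj by blast
    thus False using e M_idx by metis
  qed
qed


lemma ap_idx: "i < 4 \<Longrightarrow> ap x v $ i = (\<Sum>j<4. ent x i j * v $ j)"
  by (simp add: ap_def)
lemma dim_ap[simp]: "dim_vec (ap x v) = 4" by (simp add: ap_def)

lemma ap_ap: "i < 4 \<Longrightarrow> ap x (ap y v) $ i = (\<Sum>k<4. (\<Sum>j<4. ent x i j * ent y j k) * v $ k)"
proof -
  assume i: "i < 4"
  have "ap x (ap y v) $ i = (\<Sum>j<4. ent x i j * (\<Sum>k<4. ent y j k * v $ k))"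
    using i by (simp add: ap_idx)
  also have "\<dots> = (\<Sum>j<4. \<Sum>k<4. ent x i j * ent y j k * v $ k)"
    by (simp add: sum_distrib_left mult.assoc)
  also have "\<dots> = (\<Sum>k<4. \<Sum>j<4. ent x i j * ent y j k * v $ k)"
    by (rule sum.swap)
  also have "\<dots> = (\<Sum>k<4. (\<Sum>j<4. ent x i j * ent y j k) * v $ k)"
    by (simp add: sum_distrib_right)
  finally show ?thesis .
qed

lemma ap_anti: "\<not> lcomm x y \<Longrightarrow> i < 4 \<Longrightarrow> ap x (ap y v) $ i = - (ap y (ap x v) $ i)"
  unfolding ap_ap sum_negf[symmetric]
  by (rule sum.cong) (auto simp: prod4 sp_anti)

lemma sp_same: "a < 2 \<Longrightarrow> b < 2 \<Longrightarrow> sp p p a b = (if a = b then 1 else 0)"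
  by (simp add: sp_om; cases p; auto)

lemma divmod_eq: "((i::nat) div 2 = k div 2 \<and> i mod 2 = k mod 2) \<longleftrightarrow> i = k"
  by (metis div_mult_mod_eq)

lemma ap_sq: "i < 4 \<Longrightarrow> ap y (ap y v) $ i = v $ i"
proof -
  assume i: "i < 4"
  have "ap y (ap y v) $ i = (\<Sum>k<4. (if k = i then v $ k else 0))"
    unfolding ap_ap[OF i]
  proof (rule sum.cong)
    fix k assume "k \<in> {..<4::nat}"
    hence k: "k < 4" by simp
    have "(\<Sum>j<4. ent y i j * ent y j k) = (if i div 2 = k div 2 \<and> i mod 2 = k mod 2 then 1 else 0)"
      unfolding prod4[OF i k] using i k by (simp add: sp_same)
    thus "(\<Sum>j<4. ent y i j * ent y j k) * v $ k = (if k = i then v $ k else 0)"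
      by (simp only: divmod_eq) auto
  qed simp
  also have "\<dots> = v $ i" using i by (simp add: sum.delta)
  finally show ?thesis .
qed

lemma ap_lmul: "i < 4 \<Longrightarrow> ap y (ap z v) $ i = om (fst y) (fst z) * om (snd y) (snd z) * ap (lmul y z) v $ i"
proof -
  assume i: "i < 4"
  have "ap y (ap z v) $ i = (\<Sum>k<4. om (fst y) (fst z) * om (snd y) (snd z) * (ent (lmul y z) i k * v $ k))"
    unfolding ap_ap[OF i]
  proof (rule sum.cong)
    fix k assume "k \<in> {..<4::nat}"
    hence k: "k < 4" by simp
    show "(\<Sum>j<4. ent y i j * ent z j k) * v $ k = om (fst y) (fst z) * om (snd y) (snd z) * (ent (lmul y z) i k * v $ k)"
      unfolding prod4[OF i k] using i k by (simp add: sp_om lmul_def ent_def)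
  qed simp
  also have "\<dots> = om (fst y) (fst z) * om (snd y) (snd z) * ap (lmul y z) v $ i"
    using i by (simp add: ap_idx sum_distrib_left)
  finally show ?thesis .
qed



lemma spm_herm: "a < 2 \<Longrightarrow> b < 2 \<Longrightarrow> cnj (spm p a b) = spm p b a"
  unfolding less2 by (cases p; auto)

lemma ent_herm: "i < 4 \<Longrightarrow> j < 4 \<Longrightarrow> cnj (ent x i j) = ent x j i"
  by (simp add: ent_def spm_herm)

lemma herm: "braket (ap x u) w = braket u (ap x w)"
proof -
  have "braket (ap x u) w = (\<Sum>i<4. \<Sum>j<4. cnj (u $ j) * ent x j i * w $ i)"
    unfolding braket_def
    by (rule sum.cong) (auto simp: ap_idx sum_distrib_right ent_herm intro!: sum.cong)
  also have "\<dots> = (\<Sum>j<4. \<Sum>i<4. cnj (u $ j) * ent x j i * w $ i)" by (rule sum.swap)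
  also have "\<dots> = braket u (ap x w)"
    unfolding braket_def
    by (rule sum.cong) (auto simp: ap_idx sum_distrib_left mult_ac)
  finally show ?thesis .
qed

lemma braket_cnj: "braket w v = cnj (braket v w)"
  by (simp add: braket_def mult.commute)

lemma UNIV_pauli: "(UNIV :: pauli set) = {PI, PX, PY, PZ}"
  using pauli.exhaust by auto

lemma finite_pauli[simp]: "finite (UNIV :: pauli set)"
  by (simp add: UNIV_pauli)

lemma compl1: "a < 2 \<Longrightarrow> b < 2 \<Longrightarrow> c < 2 \<Longrightarrow> d < 2 \<Longrightarrow>
  (\<Sum>p\<in>UNIV. spm p a b * spm p c d) = (if a = d \<and> b = c then 2 else 0)"
  unfolding UNIV_pauli less2 by auto

lemma compl2: "i < 4 \<Longrightarrow> j < 4 \<Longrightarrow> k < 4 \<Longrightarrow> l < 4 \<Longrightarrow>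
  (\<Sum>x\<in>UNIV. ent x i j * ent x k l) = (if i = l \<and> j = k then 4 else 0)"
proof -
  assume a: "i < 4" "j < 4" "k < 4" "l < 4"
  have "(\<Sum>x\<in>UNIV. ent x i j * ent x k l) =
     (\<Sum>p\<in>UNIV. \<Sum>q\<in>UNIV. (spm p (i div 2) (j div 2) * spm p (k div 2) (l div 2)) *
        (spm q (i mod 2) (j mod 2) * spm q (k mod 2) (l mod 2)))"
    unfolding sum.cartesian_product UNIV_Times_UNIV by (simp add: ent_def mult_ac case_prod_beta)
  also have "\<dots> = (\<Sum>p\<in>UNIV. spm p (i div 2) (j div 2) * spm p (k div 2) (l div 2)) *
      (\<Sum>q\<in>UNIV. spm q (i mod 2) (j mod 2) * spm q (k mod 2) (l mod 2))"
    by (simp add: sum_product)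
  also have "\<dots> = (if i div 2 = l div 2 \<and> j div 2 = k div 2 then 2 else 0) *
                  (if i mod 2 = l mod 2 \<and> j mod 2 = k mod 2 then 2 else 0)"
    using a by (simp add: compl1)
  also have "\<dots> = (if i = l \<and> j = k then 4 else 0)"
    using divmod_eq[of i l] divmod_eq[of j k] by auto
  finally show ?thesis .
qed

definition ex :: "complex vec \<Rightarrow> lab \<Rightarrow> complex" where
  "ex v x = braket v (ap x v)"

lemma ex_sum: "ex u x = (\<Sum>i<4. \<Sum>j<4. (cnj (u $ i) * u $ j) * ent x i j)"
  unfolding ex_def braket_def
  by (rule sum.cong) (auto simp: ap_idx sum_distrib_left mult_ac)

lemma dsum: "(i::nat) < 4 \<Longrightarrow> (j::nat) < 4 \<Longrightarrow>
   (\<Sum>k<4. \<Sum>l<4. if i = l \<and> j = k then f k l else (0::complex)) = f j i"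
proof -
  assume a: "i < 4" "j < 4"
  have "(\<Sum>k<4. \<Sum>l<4. if i = l \<and> j = k then f k l else (0::complex)) =
        (\<Sum>k<4. if k = j then (\<Sum>l<4. if l = i then f k l else 0) else 0)"
    by (rule sum.cong) (auto intro!: sum.cong)
  also have "\<dots> = f j i" using a by (simp add: sum.delta)
  finally show ?thesis .
qed

lemma fierz: "(\<Sum>x\<in>UNIV. ex v x * ex w x) = 4 * (braket v w * braket w v)"
proof -
  define a where "a i j = cnj (v $ i) * v $ j" for i j
  define b where "b i j = cnj (w $ i) * w $ j" for i j
  have e: "ex v x * ex w x = (\<Sum>i<4. \<Sum>j<4. \<Sum>k<4. \<Sum>l<4. (a i j * ent x i j) * (b k l * ent x k l))" for x
    unfolding ex_sum a_def b_def sum_distrib_right unfolding sum_distrib_left by (rule refl)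
  have "(\<Sum>x\<in>UNIV. ex v x * ex w x) =
     (\<Sum>x\<in>UNIV. \<Sum>i<4. \<Sum>j<4. \<Sum>k<4. \<Sum>l<4. a i j * b k l * (ent x i j * ent x k l))"
    unfolding e by (intro sum.cong refl) (simp add: mult_ac)
  also have "\<dots> = (\<Sum>i<4. \<Sum>j<4. \<Sum>k<4. \<Sum>l<4. \<Sum>x\<in>UNIV. a i j * b k l * (ent x i j * ent x k l))"
    by (simp only: sum.swap[of _ "UNIV::lab set"])
  also have "\<dots> = (\<Sum>i<4. \<Sum>j<4. \<Sum>k<4. \<Sum>l<4. if i = l \<and> j = k then 4 * (a i j * b k l) else 0)"
    by (intro sum.cong refl) (simp add: sum_distrib_left[symmetric] compl2)
  also have "\<dots> = (\<Sum>i<4. \<Sum>j<4. 4 * (a i j * b j i))"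
    by (intro sum.cong refl) (simp add: dsum)
  also have "\<dots> = 4 * (braket v w * braket w v)"
    unfolding braket_def a_def b_def
    by (simp add: sum_product sum_distrib_left mult_ac)
  finally show ?thesis .
qed



lemma braket_smult_r: "(\<And>i. i < 4 \<Longrightarrow> u $ i = c * v $ i) \<Longrightarrow> braket z u = c * braket z v"
  unfolding braket_def sum_distrib_left by (rule sum.cong) (auto simp: mult_ac)

lemma braket_smult_l: "(\<And>i. i < 4 \<Longrightarrow> u $ i = c * v $ i) \<Longrightarrow> braket u z = cnj c * braket v z"
  unfolding braket_def sum_distrib_left by (rule sum.cong) (auto simp: mult_ac)

lemma braket_neg: "(\<And>i. i < 4 \<Longrightarrow> u $ i = - (v $ i)) \<Longrightarrow> braket z u = - braket z v"
  using braket_smult_r[of u "-1" v z] by simp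

lemma ap_lin: "(\<And>i. i < 4 \<Longrightarrow> u $ i = c * v $ i) \<Longrightarrow> (j::nat) < 4 \<Longrightarrow> ap x u $ j = c * ap x v $ j"
  by (simp add: ap_idx sum_distrib_left mult_ac)

lemma vanish:
  assumes e: "\<And>i::nat. i < 4 \<Longrightarrow> ap y v $ i = c * v $ i" and n: "braket v v = 1"
    and nc: "\<not> lcomm x y"
  shows "ex v x = 0"
proof -
  have c_real: "cnj c = c"
  proof -
    have "braket v (ap y v) = c" using braket_smult_r[OF e, of v] n by simp
    moreover have "braket (ap y v) v = cnj c" using braket_smult_l[OF e, of v] n by simp
    ultimately show ?thesis using herm[of y v v] by simp
  qed
  have cnz: "c \<noteq> 0"
  proof
    assume c0: "c = 0"
    have "\<And>i::nat. i < 4 \<Longrightarrow> v $ i = 0 * v $ i"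
    proof -
      fix i :: nat assume i: "i < 4"
      have "v $ i = ap y (ap y v) $ i" using ap_sq[OF i] by simp
      also have "\<dots> = c * ap y v $ i" using ap_lin[of "ap y v" c v, OF e i] by simp
      finally show "v $ i = 0 * v $ i" using c0 by simp
    qed
    hence "braket v v = 0 * braket v v" by (rule braket_smult_r)
    thus False using n by simp
  qed
  have "braket v (ap x (ap y v)) = c * ex v x"
    unfolding ex_def by (rule braket_smult_r) (rule ap_lin[OF e])
  moreover have "braket v (ap y (ap x v)) = cnj c * ex v x"
  proof -
    have "braket v (ap y (ap x v)) = braket (ap y v) (ap x v)" by (rule herm[symmetric])
    also have "\<dots> = cnj c * braket v (ap x v)" by (rule braket_smult_l[OF e])
    finally show ?thesis unfolding ex_def .
  qed
  moreover have "braket v (ap x (ap y v)) = - braket v (ap y (ap x v))"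
    by (rule braket_neg) (rule ap_anti[OF nc])
  ultimately have "c * ex v x = - (c * ex v x)" using c_real by simp
  thus ?thesis using cnz by simp
qed

definition NI :: "lab set" where "NI = {x. x \<noteq> (PI, PI)}"

definition maxl :: "lab set \<Rightarrow> bool" where
  "maxl L \<longleftrightarrow> L \<subseteq> NI \<and> (\<forall>x \<in> NI - L. \<exists>y\<in>L. \<not> lcomm x y)"

definition ceig :: "lab set \<Rightarrow> complex vec \<Rightarrow> bool" where
  "ceig L v \<longleftrightarrow> dim_vec v = 4 \<and> braket v v = 1 \<and> (\<forall>y\<in>L. \<exists>c. \<forall>i<4. ap y v $ i = c * v $ i)"

lemma ap_id: "dim_vec v = 4 \<Longrightarrow> i < 4 \<Longrightarrow> ap (PI, PI) v $ i = v $ i"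
  by (simp add: ap_idx ent_def sum4 less4; elim disjE; simp)

lemma ex_id: "dim_vec v = 4 \<Longrightarrow> braket v v = 1 \<Longrightarrow> ex v (PI, PI) = 1"
  unfolding ex_def using braket_smult_r[of "ap (PI,PI) v" 1 v v] ap_id by simp

lemma ex_zero: "maxl L \<Longrightarrow> ceig L v \<Longrightarrow> x \<in> NI - L \<Longrightarrow> ex v x = 0"
  unfolding maxl_def ceig_def using vanish by blast

lemma unb:
  assumes "maxl L" "maxl K" "L \<inter> K = {}" "ceig L v" "ceig K w"
  shows "cmod (braket v w) = 1 / sqrt 4"
proof -
  have fin: "finite (UNIV :: lab set)" unfolding UNIV_Times_UNIV[symmetric] by (rule finite_cartesian_product) simp_all
  have z: "ex v x * ex w x = 0" if "x \<in> UNIV - {(PI,PI)}" for x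
  proof -
    have "x \<in> NI" using that by (simp add: NI_def)
    hence "x \<in> NI - L \<or> x \<in> NI - K" using assms(3) by blast
    thus ?thesis using ex_zero assms by fastforce
  qed
  have "(\<Sum>x\<in>UNIV. ex v x * ex w x) = ex v (PI,PI) * ex w (PI,PI) + (\<Sum>x\<in>UNIV - {(PI,PI)}. ex v x * ex w x)"
    using sum.remove[OF fin, of "(PI,PI)"] by simp
  also have "\<dots> = 1" using z ex_id assms(4,5) by (simp add: ceig_def sum.neutral)
  finally have "4 * (braket v w * cnj (braket v w)) = 1" using fierz[of v w] braket_cnj[of w v] by simp
  hence "complex_of_real (4 * cmod (braket v w) ^ 2) = 1"
    using complex_norm_square[of "braket v w"] by simp
  hence h: "4 * cmod (braket v w) ^ 2 = 1" by (simp only: of_real_eq_1_iff)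
  have "(2 * cmod (braket v w) - 1) * (2 * cmod (braket v w) + 1) = 0"
    using h by (simp add: algebra_simps power2_eq_square)
  moreover have "2 * cmod (braket v w) + 1 > 0" using norm_ge_zero[of "braket v w"] by linarith
  ultimately have "cmod (braket v w) = 1/2" by simp
  thus ?thesis by simp
qed



definition hh :: complex where "hh = complex_of_real (sqrt 2 / 2)"
lemma hh_sq[simp]: "hh * hh = 1/2"
proof -
  have "sqrt 2 / 2 * (sqrt 2 / 2) = (sqrt 2 * sqrt 2) / (4::real)" by simp
  hence "sqrt 2 / 2 * (sqrt 2 / 2) = (1/2::real)" by simp
  hence "complex_of_real (sqrt 2 / 2 * (sqrt 2 / 2)) = 1/2" by simp
  thus ?thesis unfolding hh_def of_real_mult .
qed
lemma hh_cnj[simp]: "cnj hh = hh" by (simp add: hh_def)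
lemma hh_sq'[simp]: "hh * (hh * z) = z/2" by (simp add: mult.assoc[symmetric])

definition v4 :: "complex \<Rightarrow> complex \<Rightarrow> complex \<Rightarrow> complex \<Rightarrow> complex vec" where
  "v4 a b c d = vec 4 (\<lambda>i. if i = 0 then a else if i = 1 then b else if i = 2 then c else d)"
lemma v4_idx[simp]: "v4 a b c d $ 0 = a" "v4 a b c d $ Suc 0 = b" "v4 a b c d $ 1 = b"
  "v4 a b c d $ 2 = c" "v4 a b c d $ 3 = d" "dim_vec (v4 a b c d) = 4"
  by (simp_all add: v4_def)

lemma all4: "(\<forall>i<4. P i) \<longleftrightarrow> P 0 \<and> P 1 \<and> P 2 \<and> P (3::nat)"
  using less4 by auto

definition EB :: "complex vec set \<Rightarrow> lab set \<Rightarrow> bool" where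
  "EB B L \<longleftrightarrow> onb4 B \<and> (\<forall>v\<in>B. \<forall>y\<in>L. \<exists>c. \<forall>i<4. ap y v $ i = c * v $ i)"

lemma eigpm: "(\<forall>i<4. ap y v $ i = v $ i) \<or> (\<forall>i<4. ap y v $ i = - v $ i) \<Longrightarrow> \<exists>c. \<forall>i<4. ap y v $ i = c * v $ i"
  by (metis mult_1 mult_minus1)

lemma onb4I:
  assumes "dim_vec a = 4" "dim_vec b = 4" "dim_vec c = 4" "dim_vec d = 4"
    "braket a a = 1" "braket b b = 1" "braket c c = 1" "braket d d = 1"
    "braket a b = 0" "braket a c = 0" "braket a d = 0" "braket b c = 0" "braket b d = 0" "braket c d = 0"
    "braket b a = 0" "braket c a = 0" "braket d a = 0" "braket c b = 0" "braket d b = 0" "braket d c = 0"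
  shows "onb4 {a, b, c, d}"
proof -
  have d: "a \<noteq> b" "a \<noteq> c" "a \<noteq> d" "b \<noteq> c" "b \<noteq> d" "c \<noteq> d" using assms by auto
  show ?thesis unfolding onb4_def using d assms by auto
qed

definition "BB0 = {(v4 (1/2) (1/2) (1/2) (1/2)), (v4 (1/2) (1/2) (-1/2) (-1/2)), (v4 (1/2) (-1/2) (1/2) (-1/2)), (v4 (1/2) (-1/2) (-1/2) (1/2))}"
definition "LL0 = {(PI, PX), (PX, PI), (PX, PX)}"
lemma EB0: "EB BB0 LL0"
  unfolding EB_def BB0_def LL0_def
proof (intro conjI)
  show "onb4 {(v4 (1/2) (1/2) (1/2) (1/2)), (v4 (1/2) (1/2) (-1/2) (-1/2)), (v4 (1/2) (-1/2) (1/2) (-1/2)), (v4 (1/2) (-1/2) (-1/2) (1/2))}"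
    by (rule onb4I) (simp_all add: braket_def sum4 algebra_simps)
  show "\<forall>v\<in>{(v4 (1/2) (1/2) (1/2) (1/2)), (v4 (1/2) (1/2) (-1/2) (-1/2)), (v4 (1/2) (-1/2) (1/2) (-1/2)), (v4 (1/2) (-1/2) (-1/2) (1/2))}. \<forall>y\<in>{(PI, PX), (PX, PI), (PX, PX)}. \<exists>c. \<forall>i<4. ap y v $ i = c * v $ i"
    by (intro ballI; elim insertE emptyE; hypsubst; rule eigpm; simp add: all4 ap_idx ent_def sum4 algebra_simps)
qed

definition "BB1 = {(v4 (1/2) (1/2) (\<i>/2) (\<i>/2)), (v4 (1/2) (1/2) (-\<i>/2) (-\<i>/2)), (v4 (1/2) (-1/2) (\<i>/2) (-\<i>/2)), (v4 (1/2) (-1/2) (-\<i>/2) (\<i>/2))}"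
definition "LL1 = {(PI, PX), (PY, PI), (PY, PX)}"
lemma EB1: "EB BB1 LL1"
  unfolding EB_def BB1_def LL1_def
proof (intro conjI)
  show "onb4 {(v4 (1/2) (1/2) (\<i>/2) (\<i>/2)), (v4 (1/2) (1/2) (-\<i>/2) (-\<i>/2)), (v4 (1/2) (-1/2) (\<i>/2) (-\<i>/2)), (v4 (1/2) (-1/2) (-\<i>/2) (\<i>/2))}"
    by (rule onb4I) (simp_all add: braket_def sum4 algebra_simps)
  show "\<forall>v\<in>{(v4 (1/2) (1/2) (\<i>/2) (\<i>/2)), (v4 (1/2) (1/2) (-\<i>/2) (-\<i>/2)), (v4 (1/2) (-1/2) (\<i>/2) (-\<i>/2)), (v4 (1/2) (-1/2) (-\<i>/2) (\<i>/2))}. \<forall>y\<in>{(PI, PX), (PY, PI), (PY, PX)}. \<exists>c. \<forall>i<4. ap y v $ i = c * v $ i"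
    by (intro ballI; elim insertE emptyE; hypsubst; rule eigpm; simp add: all4 ap_idx ent_def sum4 algebra_simps)
qed

definition "BB2 = {(v4 (hh) (hh) (0) (0)), (v4 (0) (0) (hh) (hh)), (v4 (hh) (-hh) (0) (0)), (v4 (0) (0) (hh) (-hh))}"
definition "LL2 = {(PI, PX), (PZ, PI), (PZ, PX)}"
lemma EB2: "EB BB2 LL2"
  unfolding EB_def BB2_def LL2_def
proof (intro conjI)
  show "onb4 {(v4 (hh) (hh) (0) (0)), (v4 (0) (0) (hh) (hh)), (v4 (hh) (-hh) (0) (0)), (v4 (0) (0) (hh) (-hh))}"
    by (rule onb4I) (simp_all add: braket_def sum4 algebra_simps)
  show "\<forall>v\<in>{(v4 (hh) (hh) (0) (0)), (v4 (0) (0) (hh) (hh)), (v4 (hh) (-hh) (0) (0)), (v4 (0) (0) (hh) (-hh))}. \<forall>y\<in>{(PI, PX), (PZ, PI), (PZ, PX)}. \<exists>c. \<forall>i<4. ap y v $ i = c * v $ i"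
    by (intro ballI; elim insertE emptyE; hypsubst; rule eigpm; simp add: all4 ap_idx ent_def sum4 algebra_simps)
qed

definition "BB3 = {(v4 (1/2) (\<i>/2) (1/2) (\<i>/2)), (v4 (1/2) (\<i>/2) (-1/2) (-\<i>/2)), (v4 (1/2) (-\<i>/2) (1/2) (-\<i>/2)), (v4 (1/2) (-\<i>/2) (-1/2) (\<i>/2))}"
definition "LL3 = {(PI, PY), (PX, PI), (PX, PY)}"
lemma EB3: "EB BB3 LL3"
  unfolding EB_def BB3_def LL3_def
proof (intro conjI)
  show "onb4 {(v4 (1/2) (\<i>/2) (1/2) (\<i>/2)), (v4 (1/2) (\<i>/2) (-1/2) (-\<i>/2)), (v4 (1/2) (-\<i>/2) (1/2) (-\<i>/2)), (v4 (1/2) (-\<i>/2) (-1/2) (\<i>/2))}"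
    by (rule onb4I) (simp_all add: braket_def sum4 algebra_simps)
  show "\<forall>v\<in>{(v4 (1/2) (\<i>/2) (1/2) (\<i>/2)), (v4 (1/2) (\<i>/2) (-1/2) (-\<i>/2)), (v4 (1/2) (-\<i>/2) (1/2) (-\<i>/2)), (v4 (1/2) (-\<i>/2) (-1/2) (\<i>/2))}. \<forall>y\<in>{(PI, PY), (PX, PI), (PX, PY)}. \<exists>c. \<forall>i<4. ap y v $ i = c * v $ i"
    by (intro ballI; elim insertE emptyE; hypsubst; rule eigpm; simp add: all4 ap_idx ent_def sum4 algebra_simps)
qed

definition "BB4 = {(v4 (1/2) (\<i>/2) (\<i>/2) (-1/2)), (v4 (1/2) (\<i>/2) (-\<i>/2) (1/2)), (v4 (1/2) (-\<i>/2) (\<i>/2) (1/2)), (v4 (1/2) (-\<i>/2) (-\<i>/2) (-1/2))}"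
definition "LL4 = {(PI, PY), (PY, PI), (PY, PY)}"
lemma EB4: "EB BB4 LL4"
  unfolding EB_def BB4_def LL4_def
proof (intro conjI)
  show "onb4 {(v4 (1/2) (\<i>/2) (\<i>/2) (-1/2)), (v4 (1/2) (\<i>/2) (-\<i>/2) (1/2)), (v4 (1/2) (-\<i>/2) (\<i>/2) (1/2)), (v4 (1/2) (-\<i>/2) (-\<i>/2) (-1/2))}"
    by (rule onb4I) (simp_all add: braket_def sum4 algebra_simps)
  show "\<forall>v\<in>{(v4 (1/2) (\<i>/2) (\<i>/2) (-1/2)), (v4 (1/2) (\<i>/2) (-\<i>/2) (1/2)), (v4 (1/2) (-\<i>/2) (\<i>/2) (1/2)), (v4 (1/2) (-\<i>/2) (-\<i>/2) (-1/2))}. \<forall>y\<in>{(PI, PY), (PY, PI), (PY, PY)}. \<exists>c. \<forall>i<4. ap y v $ i = c * v $ i"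
    by (intro ballI; elim insertE emptyE; hypsubst; rule eigpm; simp add: all4 ap_idx ent_def sum4 algebra_simps)
qed

definition "BB5 = {(v4 (hh) (\<i>*hh) (0) (0)), (v4 (0) (0) (hh) (\<i>*hh)), (v4 (hh) (-\<i>*hh) (0) (0)), (v4 (0) (0) (hh) (-\<i>*hh))}"
definition "LL5 = {(PI, PY), (PZ, PI), (PZ, PY)}"
lemma EB5: "EB BB5 LL5"
  unfolding EB_def BB5_def LL5_def
proof (intro conjI)
  show "onb4 {(v4 (hh) (\<i>*hh) (0) (0)), (v4 (0) (0) (hh) (\<i>*hh)), (v4 (hh) (-\<i>*hh) (0) (0)), (v4 (0) (0) (hh) (-\<i>*hh))}"
    by (rule onb4I) (simp_all add: braket_def sum4 algebra_simps)
  show "\<forall>v\<in>{(v4 (hh) (\<i>*hh) (0) (0)), (v4 (0) (0) (hh) (\<i>*hh)), (v4 (hh) (-\<i>*hh) (0) (0)), (v4 (0) (0) (hh) (-\<i>*hh))}. \<forall>y\<in>{(PI, PY), (PZ, PI), (PZ, PY)}. \<exists>c. \<forall>i<4. ap y v $ i = c * v $ i"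
    by (intro ballI; elim insertE emptyE; hypsubst; rule eigpm; simp add: all4 ap_idx ent_def sum4 algebra_simps)
qed

definition "BB6 = {(v4 (hh) (0) (hh) (0)), (v4 (hh) (0) (-hh) (0)), (v4 (0) (hh) (0) (hh)), (v4 (0) (hh) (0) (-hh))}"
definition "LL6 = {(PI, PZ), (PX, PI), (PX, PZ)}"
lemma EB6: "EB BB6 LL6"
  unfolding EB_def BB6_def LL6_def
proof (intro conjI)
  show "onb4 {(v4 (hh) (0) (hh) (0)), (v4 (hh) (0) (-hh) (0)), (v4 (0) (hh) (0) (hh)), (v4 (0) (hh) (0) (-hh))}"
    by (rule onb4I) (simp_all add: braket_def sum4 algebra_simps)
  show "\<forall>v\<in>{(v4 (hh) (0) (hh) (0)), (v4 (hh) (0) (-hh) (0)), (v4 (0) (hh) (0) (hh)), (v4 (0) (hh) (0) (-hh))}. \<forall>y\<in>{(PI, PZ), (PX, PI), (PX, PZ)}. \<exists>c. \<forall>i<4. ap y v $ i = c * v $ i"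
    by (intro ballI; elim insertE emptyE; hypsubst; rule eigpm; simp add: all4 ap_idx ent_def sum4 algebra_simps)
qed

definition "BB7 = {(v4 (hh) (0) (\<i>*hh) (0)), (v4 (hh) (0) (-\<i>*hh) (0)), (v4 (0) (hh) (0) (\<i>*hh)), (v4 (0) (hh) (0) (-\<i>*hh))}"
definition "LL7 = {(PI, PZ), (PY, PI), (PY, PZ)}"
lemma EB7: "EB BB7 LL7"
  unfolding EB_def BB7_def LL7_def
proof (intro conjI)
  show "onb4 {(v4 (hh) (0) (\<i>*hh) (0)), (v4 (hh) (0) (-\<i>*hh) (0)), (v4 (0) (hh) (0) (\<i>*hh)), (v4 (0) (hh) (0) (-\<i>*hh))}"
    by (rule onb4I) (simp_all add: braket_def sum4 algebra_simps)
  show "\<forall>v\<in>{(v4 (hh) (0) (\<i>*hh) (0)), (v4 (hh) (0) (-\<i>*hh) (0)), (v4 (0) (hh) (0) (\<i>*hh)), (v4 (0) (hh) (0) (-\<i>*hh))}. \<forall>y\<in>{(PI, PZ), (PY, PI), (PY, PZ)}. \<exists>c. \<forall>i<4. ap y v $ i = c * v $ i"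
    by (intro ballI; elim insertE emptyE; hypsubst; rule eigpm; simp add: all4 ap_idx ent_def sum4 algebra_simps)
qed

definition "BB8 = {(v4 (1) (0) (0) (0)), (v4 (0) (0) (1) (0)), (v4 (0) (1) (0) (0)), (v4 (0) (0) (0) (1))}"
definition "LL8 = {(PI, PZ), (PZ, PI), (PZ, PZ)}"
lemma EB8: "EB BB8 LL8"
  unfolding EB_def BB8_def LL8_def
proof (intro conjI)
  show "onb4 {(v4 (1) (0) (0) (0)), (v4 (0) (0) (1) (0)), (v4 (0) (1) (0) (0)), (v4 (0) (0) (0) (1))}"
    by (rule onb4I) (simp_all add: braket_def sum4 algebra_simps)
  show "\<forall>v\<in>{(v4 (1) (0) (0) (0)), (v4 (0) (0) (1) (0)), (v4 (0) (1) (0) (0)), (v4 (0) (0) (0) (1))}. \<forall>y\<in>{(PI, PZ), (PZ, PI), (PZ, PZ)}. \<exists>c. \<forall>i<4. ap y v $ i = c * v $ i"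
    by (intro ballI; elim insertE emptyE; hypsubst; rule eigpm; simp add: all4 ap_idx ent_def sum4 algebra_simps)
qed

definition "BB9 = {(v4 (0) (hh) (hh) (0)), (v4 (hh) (0) (0) (hh)), (v4 (hh) (0) (0) (-hh)), (v4 (0) (hh) (-hh) (0))}"
definition "LL9 = {(PX, PX), (PY, PY), (PZ, PZ)}"
lemma EB9: "EB BB9 LL9"
  unfolding EB_def BB9_def LL9_def
proof (intro conjI)
  show "onb4 {(v4 (0) (hh) (hh) (0)), (v4 (hh) (0) (0) (hh)), (v4 (hh) (0) (0) (-hh)), (v4 (0) (hh) (-hh) (0))}"
    by (rule onb4I) (simp_all add: braket_def sum4 algebra_simps)
  show "\<forall>v\<in>{(v4 (0) (hh) (hh) (0)), (v4 (hh) (0) (0) (hh)), (v4 (hh) (0) (0) (-hh)), (v4 (0) (hh) (-hh) (0))}. \<forall>y\<in>{(PX, PX), (PY, PY), (PZ, PZ)}. \<exists>c. \<forall>i<4. ap y v $ i = c * v $ i"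
    by (intro ballI; elim insertE emptyE; hypsubst; rule eigpm; simp add: all4 ap_idx ent_def sum4 algebra_simps)
qed

definition "BB10 = {(v4 (1/2) (\<i>/2) (\<i>/2) (1/2)), (v4 (1/2) (-\<i>/2) (-\<i>/2) (1/2)), (v4 (1/2) (-\<i>/2) (\<i>/2) (-1/2)), (v4 (1/2) (\<i>/2) (-\<i>/2) (-1/2))}"
definition "LL10 = {(PX, PX), (PY, PZ), (PZ, PY)}"
lemma EB10: "EB BB10 LL10"
  unfolding EB_def BB10_def LL10_def
proof (intro conjI)
  show "onb4 {(v4 (1/2) (\<i>/2) (\<i>/2) (1/2)), (v4 (1/2) (-\<i>/2) (-\<i>/2) (1/2)), (v4 (1/2) (-\<i>/2) (\<i>/2) (-1/2)), (v4 (1/2) (\<i>/2) (-\<i>/2) (-1/2))}"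
    by (rule onb4I) (simp_all add: braket_def sum4 algebra_simps)
  show "\<forall>v\<in>{(v4 (1/2) (\<i>/2) (\<i>/2) (1/2)), (v4 (1/2) (-\<i>/2) (-\<i>/2) (1/2)), (v4 (1/2) (-\<i>/2) (\<i>/2) (-1/2)), (v4 (1/2) (\<i>/2) (-\<i>/2) (-1/2))}. \<forall>y\<in>{(PX, PX), (PY, PZ), (PZ, PY)}. \<exists>c. \<forall>i<4. ap y v $ i = c * v $ i"
    by (intro ballI; elim insertE emptyE; hypsubst; rule eigpm; simp add: all4 ap_idx ent_def sum4 algebra_simps)
qed

definition "BB11 = {(v4 (hh) (0) (0) (\<i>*hh)), (v4 (0) (hh) (-\<i>*hh) (0)), (v4 (0) (hh) (\<i>*hh) (0)), (v4 (hh) (0) (0) (-\<i>*hh))}"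
definition "LL11 = {(PX, PY), (PY, PX), (PZ, PZ)}"
lemma EB11: "EB BB11 LL11"
  unfolding EB_def BB11_def LL11_def
proof (intro conjI)
  show "onb4 {(v4 (hh) (0) (0) (\<i>*hh)), (v4 (0) (hh) (-\<i>*hh) (0)), (v4 (0) (hh) (\<i>*hh) (0)), (v4 (hh) (0) (0) (-\<i>*hh))}"
    by (rule onb4I) (simp_all add: braket_def sum4 algebra_simps)
  show "\<forall>v\<in>{(v4 (hh) (0) (0) (\<i>*hh)), (v4 (0) (hh) (-\<i>*hh) (0)), (v4 (0) (hh) (\<i>*hh) (0)), (v4 (hh) (0) (0) (-\<i>*hh))}. \<forall>y\<in>{(PX, PY), (PY, PX), (PZ, PZ)}. \<exists>c. \<forall>i<4. ap y v $ i = c * v $ i"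
    by (intro ballI; elim insertE emptyE; hypsubst; rule eigpm; simp add: all4 ap_idx ent_def sum4 algebra_simps)
qed

definition "BB12 = {(v4 (1/2) (-1/2) (\<i>/2) (\<i>/2)), (v4 (1/2) (1/2) (-\<i>/2) (\<i>/2)), (v4 (1/2) (1/2) (\<i>/2) (-\<i>/2)), (v4 (1/2) (-1/2) (-\<i>/2) (-\<i>/2))}"
definition "LL12 = {(PX, PY), (PY, PZ), (PZ, PX)}"
lemma EB12: "EB BB12 LL12"
  unfolding EB_def BB12_def LL12_def
proof (intro conjI)
  show "onb4 {(v4 (1/2) (-1/2) (\<i>/2) (\<i>/2)), (v4 (1/2) (1/2) (-\<i>/2) (\<i>/2)), (v4 (1/2) (1/2) (\<i>/2) (-\<i>/2)), (v4 (1/2) (-1/2) (-\<i>/2) (-\<i>/2))}"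
    by (rule onb4I) (simp_all add: braket_def sum4 algebra_simps)
  show "\<forall>v\<in>{(v4 (1/2) (-1/2) (\<i>/2) (\<i>/2)), (v4 (1/2) (1/2) (-\<i>/2) (\<i>/2)), (v4 (1/2) (1/2) (\<i>/2) (-\<i>/2)), (v4 (1/2) (-1/2) (-\<i>/2) (-\<i>/2))}. \<forall>y\<in>{(PX, PY), (PY, PZ), (PZ, PX)}. \<exists>c. \<forall>i<4. ap y v $ i = c * v $ i"
    by (intro ballI; elim insertE emptyE; hypsubst; rule eigpm; simp add: all4 ap_idx ent_def sum4 algebra_simps)
qed

definition "BB13 = {(v4 (1/2) (-\<i>/2) (1/2) (\<i>/2)), (v4 (1/2) (\<i>/2) (1/2) (-\<i>/2)), (v4 (1/2) (\<i>/2) (-1/2) (\<i>/2)), (v4 (1/2) (-\<i>/2) (-1/2) (-\<i>/2))}"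
definition "LL13 = {(PX, PZ), (PY, PX), (PZ, PY)}"
lemma EB13: "EB BB13 LL13"
  unfolding EB_def BB13_def LL13_def
proof (intro conjI)
  show "onb4 {(v4 (1/2) (-\<i>/2) (1/2) (\<i>/2)), (v4 (1/2) (\<i>/2) (1/2) (-\<i>/2)), (v4 (1/2) (\<i>/2) (-1/2) (\<i>/2)), (v4 (1/2) (-\<i>/2) (-1/2) (-\<i>/2))}"
    by (rule onb4I) (simp_all add: braket_def sum4 algebra_simps)
  show "\<forall>v\<in>{(v4 (1/2) (-\<i>/2) (1/2) (\<i>/2)), (v4 (1/2) (\<i>/2) (1/2) (-\<i>/2)), (v4 (1/2) (\<i>/2) (-1/2) (\<i>/2)), (v4 (1/2) (-\<i>/2) (-1/2) (-\<i>/2))}. \<forall>y\<in>{(PX, PZ), (PY, PX), (PZ, PY)}. \<exists>c. \<forall>i<4. ap y v $ i = c * v $ i"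
    by (intro ballI; elim insertE emptyE; hypsubst; rule eigpm; simp add: all4 ap_idx ent_def sum4 algebra_simps)
qed

definition "BB14 = {(v4 (1/2) (1/2) (1/2) (-1/2)), (v4 (1/2) (-1/2) (1/2) (1/2)), (v4 (1/2) (-1/2) (-1/2) (-1/2)), (v4 (1/2) (1/2) (-1/2) (1/2))}"
definition "LL14 = {(PX, PZ), (PY, PY), (PZ, PX)}"
lemma EB14: "EB BB14 LL14"
  unfolding EB_def BB14_def LL14_def
proof (intro conjI)
  show "onb4 {(v4 (1/2) (1/2) (1/2) (-1/2)), (v4 (1/2) (-1/2) (1/2) (1/2)), (v4 (1/2) (-1/2) (-1/2) (-1/2)), (v4 (1/2) (1/2) (-1/2) (1/2))}"
    by (rule onb4I) (simp_all add: braket_def sum4 algebra_simps)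
  show "\<forall>v\<in>{(v4 (1/2) (1/2) (1/2) (-1/2)), (v4 (1/2) (-1/2) (1/2) (1/2)), (v4 (1/2) (-1/2) (-1/2) (-1/2)), (v4 (1/2) (1/2) (-1/2) (1/2))}. \<forall>y\<in>{(PX, PZ), (PY, PY), (PZ, PX)}. \<exists>c. \<forall>i<4. ap y v $ i = c * v $ i"
    by (intro ballI; elim insertE emptyE; hypsubst; rule eigpm; simp add: all4 ap_idx ent_def sum4 algebra_simps)
qed



lemma lcomm_refl[simp]: "lcomm x x" by (simp add: lcomm_def anti_def)
lemma lcomm_sym: "lcomm x y \<Longrightarrow> lcomm y x" by (auto simp: lcomm_def anti_def)

lemma K: "x \<in> NI \<Longrightarrow> y \<in> NI \<Longrightarrow> z \<in> NI \<Longrightarrow> x \<noteq> y \<Longrightarrow> x \<noteq> z \<Longrightarrow> y \<noteq> z \<Longrightarrow>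
  lcomm x y \<Longrightarrow> lcomm x z \<Longrightarrow> lcomm y z \<Longrightarrow> x = lmul y z"
  by (cases y; cases z; rename_tac a b c d; case_tac a; case_tac b; case_tac c; case_tac d;
      simp_all add: NI_def lcomm_def anti_def lmul_def; cases x; rename_tac e f; case_tac e; case_tac f;
      simp_all add: NI_def lcomm_def anti_def lmul_def)

lemma pairs: "y \<in> NI \<Longrightarrow> z \<in> NI \<Longrightarrow> y \<noteq> z \<Longrightarrow> lcomm y z \<Longrightarrow> {y, z} \<subseteq> LL0 \<or> {y, z} \<subseteq> LL1 \<or> {y, z} \<subseteq> LL2 \<or> {y, z} \<subseteq> LL3 \<or> {y, z} \<subseteq> LL4 \<or> {y, z} \<subseteq> LL5 \<or> {y, z} \<subseteq> LL6 \<or> {y, z} \<subseteq> LL7 \<or> {y, z} \<subseteq> LL8 \<or> {y, z} \<subseteq> LL9 \<or> {y, z} \<subseteq> LL10 \<or> {y, z} \<subseteq> LL11 \<or> {y, z} \<subseteq> LL12 \<or> {y, z} \<subseteq> LL13 \<or> {y, z} \<subseteq> LL14"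
  by (cases y; cases z; rename_tac a b c d; case_tac a; case_tac b; case_tac c; case_tac d;
      simp_all add: NI_def lcomm_def anti_def LL0_def LL1_def LL2_def LL3_def LL4_def LL5_def LL6_def LL7_def LL8_def LL9_def LL10_def LL11_def LL12_def LL13_def LL14_def)

definition nl :: "lab list" where
  "nl = [(PI,PX),(PI,PY),(PI,PZ),(PX,PI),(PX,PX),(PX,PY),(PX,PZ),(PY,PI),(PY,PX),(PY,PY),(PY,PZ),
         (PZ,PI),(PZ,PX),(PZ,PY),(PZ,PZ)]"

lemma NI_nl: "NI = set nl"
proof -
  have "x \<in> NI \<longleftrightarrow> x \<in> set nl" for x
    by (cases x; rename_tac a b; case_tac a; case_tac b; simp add: NI_def nl_def)
  thus ?thesis by blast
qed

lemma finite_NI[simp]: "finite NI" by (simp add: NI_nl)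
lemma card_NI: "card NI = 15" by (simp add: NI_nl nl_def card_set)

lemma cardS: "x \<in> NI \<Longrightarrow> card {u \<in> NI. u \<noteq> x \<and> lcomm x u} = 6"
proof -
  assume x: "x \<in> NI"
  have "{u \<in> NI. u \<noteq> x \<and> lcomm x u} = set (filter (\<lambda>u. u \<noteq> x \<and> lcomm x u) nl)"
    by (auto simp: NI_nl)
  moreover have "length (remdups (filter (\<lambda>u. u \<noteq> x \<and> lcomm x u) nl)) = 6"
  proof -
    have "x \<in> set nl" using x by (simp add: NI_nl)
    hence "x = (PI,PX) \<or> x = (PI,PY) \<or> x = (PI,PZ) \<or> x = (PX,PI) \<or> x = (PX,PX) \<or> x = (PX,PY) \<or> x = (PX,PZ) \<or>
       x = (PY,PI) \<or> x = (PY,PX) \<or> x = (PY,PY) \<or> x = (PY,PZ) \<or> x = (PZ,PI) \<or> x = (PZ,PX) \<or> x = (PZ,PY) \<or> x = (PZ,PZ)"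
      by (simp only: nl_def set_simps insert_iff empty_iff simp_thms)
    thus ?thesis by (elim disjE; simp add: nl_def lcomm_def anti_def)
  qed
  ultimately show ?thesis by (metis card_set)
qed



definition cls :: "lab set \<Rightarrow> bool" where
  "cls L \<longleftrightarrow> L \<subseteq> NI \<and> card L = 3 \<and> (\<forall>y\<in>L. \<forall>z\<in>L. lcomm y z)"

lemma cls_finite: "cls L \<Longrightarrow> finite L"
  by (simp add: cls_def card_ge_0_finite)

lemma atmost1:
  assumes c: "cls L" and x: "x \<in> NI - L" and y: "y \<in> L" and z: "z \<in> L" and yz: "y \<noteq> z"
    and xy: "lcomm x y" and xz: "lcomm x z"
  shows False
proof -
  from c obtain a b d where L: "L = {a,b,d}" "a \<noteq> b" "b \<noteq> d" "a \<noteq> d"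
    by (auto simp: cls_def card_3_iff)
  have fL: "finite L" by (rule cls_finite[OF c])
  have "card (L - {y,z}) = 1" using c y z yz fL by (simp add: cls_def card_Diff_subset)
  then obtain w where "L - {y,z} = {w}" by (rule card_1_singletonE)
  hence w: "w \<in> L" "w \<noteq> y" "w \<noteq> z" by auto
  have sub: "L \<subseteq> NI" and lc: "\<forall>u\<in>L. \<forall>v\<in>L. lcomm u v" using c by (auto simp: cls_def)
  have "x = lmul y z"
    by (rule K) (use x y z yz xy xz sub lc in auto)
  moreover have "w = lmul y z"
    by (rule K) (use w y z yz sub lc in auto)
  ultimately show False using x w by auto
qed

lemma cls_maxl: "cls L \<Longrightarrow> maxl L"
proof -
  assume c: "cls L"
  from c obtain a b d where L: "L = {a,b,d}" "a \<noteq> b" "b \<noteq> d" "a \<noteq> d"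
    by (auto simp: cls_def card_3_iff)
  show "maxl L" unfolding maxl_def
  proof (intro conjI ballI)
    show "L \<subseteq> NI" using c by (simp add: cls_def)
    fix x assume x: "x \<in> NI - L"
    show "\<exists>y\<in>L. \<not> lcomm x y"
    proof (rule ccontr)
      assume "\<not> (\<exists>y\<in>L. \<not> lcomm x y)"
      hence "lcomm x a" "lcomm x b" using L by auto
      thus False using atmost1[OF c x, of a b] L by auto
    qed
  qed
qed

lemma card_int_le1: "cls L \<Longrightarrow> x \<in> NI - L \<Longrightarrow> card ({u \<in> NI. u \<noteq> x \<and> lcomm x u} \<inter> L) \<le> 1"
  using atmost1[of L x] cls_finite[of L]
  by (subst One_nat_def, subst card_le_Suc0_iff_eq) auto

lemma compl:
  assumes c: "cls L1" "cls L2" "cls L3" "cls L4"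
    and d: "L1 \<inter> L2 = {}" "L1 \<inter> L3 = {}" "L1 \<inter> L4 = {}" "L2 \<inter> L3 = {}" "L2 \<inter> L4 = {}" "L3 \<inter> L4 = {}"
  shows "cls (NI - (L1 \<union> L2 \<union> L3 \<union> L4))"
proof -
  define R where "R = NI - (L1 \<union> L2 \<union> L3 \<union> L4)"
  have f: "finite L1" "finite L2" "finite L3" "finite L4" using c cls_finite by auto
  have s: "L1 \<union> L2 \<union> L3 \<union> L4 \<subseteq> NI" using c by (auto simp: cls_def)
  have cU: "card (L1 \<union> L2 \<union> L3 \<union> L4) = 12"
  proof -
    have "card (L1 \<union> L2) = 6" using c f d by (simp add: card_Un_disjoint cls_def)
    moreover have "card (L1 \<union> L2 \<union> L3) = card (L1 \<union> L2) + card L3"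
      using f d by (intro card_Un_disjoint) auto
    moreover have "card (L1 \<union> L2 \<union> L3 \<union> L4) = card (L1 \<union> L2 \<union> L3) + card L4"
      using f d by (intro card_Un_disjoint) auto
    ultimately show ?thesis using c by (simp add: cls_def)
  qed
  have cR: "card R = 3" unfolding R_def
    using card_Diff_subset[OF _ s] cU card_NI f by simp
  have fR: "finite R" unfolding R_def by simp
  have comm: "lcomm x y" if x: "x \<in> R" and y: "y \<in> R" for x y
  proof (cases "x = y")
    case True thus ?thesis by simp
  next
    case False
    define S where "S = {u \<in> NI. u \<noteq> x \<and> lcomm x u}"
    have xNI: "x \<in> NI" using x by (simp add: R_def)
    have cS: "card S = 6" unfolding S_def by (rule cardS[OF xNI])
    have xL: "x \<in> NI - L1" "x \<in> NI - L2" "x \<in> NI - L3" "x \<in> NI - L4" using x by (auto simp: R_def)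
    have le: "card (S \<inter> L1) \<le> 1" "card (S \<inter> L2) \<le> 1" "card (S \<inter> L3) \<le> 1" "card (S \<inter> L4) \<le> 1"
      unfolding S_def using card_int_le1 c xL by auto
    have sub: "S \<subseteq> (S \<inter> L1) \<union> (S \<inter> L2) \<union> (S \<inter> L3) \<union> (S \<inter> L4) \<union> (S \<inter> (R - {x}))"
      unfolding S_def R_def by auto
    have fS: "finite S" unfolding S_def by simp
    have "card S \<le> card ((S \<inter> L1) \<union> (S \<inter> L2) \<union> (S \<inter> L3) \<union> (S \<inter> L4) \<union> (S \<inter> (R - {x})))"
      by (rule card_mono[OF _ sub]) (use fS in simp)
    also have "\<dots> \<le> card (S \<inter> L1) + card (S \<inter> L2) + card (S \<inter> L3) + card (S \<inter> L4) + card (S \<inter> (R - {x}))"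
      by (meson card_Un_le add_le_mono le_refl order_trans)
    finally have "card (S \<inter> (R - {x})) \<ge> 2" using cS le by linarith
    moreover have "card (R - {x}) = 2" using cR x fR by simp
    moreover have "S \<inter> (R - {x}) \<subseteq> R - {x}" by auto
    ultimately have "S \<inter> (R - {x}) = R - {x}"
      using fR card_subset_eq[of "R - {x}" "S \<inter> (R - {x})"] card_mono[of "R - {x}" "S \<inter> (R - {x})"]
      by (metis card_seteq finite_Diff)
    hence "y \<in> S" using y False by auto
    thus ?thesis by (simp add: S_def)
  qed
  show ?thesis unfolding R_def[symmetric] cls_def
    using comm cR by (auto simp: R_def)
qed



lemma nonid_M: "nonid_paulis = M ` NI"
proof
  show "nonid_paulis \<subseteq> M ` NI"
  proof
    fix A assume "A \<in> nonid_paulis"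
    then obtain p q where "A = two_qubit_pauli p q" "(p, q) \<noteq> (PI, PI)" by (auto simp: nonid_paulis_def)
    hence "A = M (p, q)" "(p, q) \<in> NI" by (auto simp: M_def NI_def)
    thus "A \<in> M ` NI" by blast
  qed
  show "M ` NI \<subseteq> nonid_paulis"
  proof
    fix A assume "A \<in> M ` NI"
    then obtain x where "x \<in> NI" "A = M x" by blast
    thus "A \<in> nonid_paulis" unfolding nonid_paulis_def M_def NI_def
      by (cases x) auto
  qed
qed

lemma class_lab:
  assumes "max_comm_class C"
  shows "cls {x \<in> NI. M x \<in> C} \<and> C = M ` {x \<in> NI. M x \<in> C}"
proof -
  let ?L = "{x \<in> NI. M x \<in> C}"
  have sub: "C \<subseteq> M ` NI" using assms by (simp add: max_comm_class_def nonid_M)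
  have CL: "C = M ` ?L" using sub by auto
  have ci: "card (M ` ?L) = card ?L" by (rule card_image) (meson M_inj inj_on_subset subset_UNIV)
  have cc: "card C = card (M ` ?L)" using CL by (rule arg_cong)
  have c3: "card C = 3" using assms by (simp add: max_comm_class_def)
  have "card ?L = 3" using ci cc c3 by linarith
  moreover have "\<forall>y\<in>?L. \<forall>z\<in>?L. lcomm y z"
    using assms by (auto simp: max_comm_class_def commute_iff[symmetric])
  ultimately have "cls ?L" by (auto simp: cls_def)
  thus ?thesis using CL by blast
qed

lemma disj_lab: "(M ` L) \<inter> (M ` K) = {} \<Longrightarrow> L \<inter> K = {}" by blast

lemma ceig_of:
  assumes "common_eigenbasis (M ` L) B" "v \<in> B"
  shows "ceig L v"
proof -
  have o: "onb4 B" and e: "\<forall>A\<in>M ` L. eigenvector A v"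
    using assms by (auto simp: common_eigenbasis_def)
  have d: "dim_vec v = 4" and n: "braket v v = 1" using o assms(2) by (auto simp: onb4_def)
  have "\<exists>c. \<forall>i<4. ap y v $ i = c * v $ i" if y: "y \<in> L" for y
  proof -
    obtain c where "M y *\<^sub>v v = c \<cdot>\<^sub>v v" using e y by (auto simp: eigenvector_def)
    hence "ap y v = c \<cdot>\<^sub>v v" using M_v[OF d] by simp
    hence "\<forall>i<4. ap y v $ i = c * v $ i" using d by auto
    thus ?thesis by blast
  qed
  thus ?thesis using d n by (simp add: ceig_def)
qed

lemma unbiased_of:
  assumes "cls L" "cls K" "L \<inter> K = {}" "common_eigenbasis (M ` L) B" "common_eigenbasis (M ` K) B'"
  shows "unbiased B B'"
proof -
  have "cmod (braket a b) = 1 / sqrt 4" if "a \<in> B" "b \<in> B'" for a b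
    by (rule unb[OF cls_maxl[OF assms(1)] cls_maxl[OF assms(2)] assms(3)
          ceig_of[OF assms(4) that(1)] ceig_of[OF assms(5) that(2)]])
  thus ?thesis using assms(4,5) unfolding unbiased_def common_eigenbasis_def by blast
qed

lemma EB_mono: "EB B L \<Longrightarrow> K \<subseteq> L \<Longrightarrow> EB B K"
  by (auto simp: EB_def)

lemma EB_close:
  assumes e: "EB B {a, b}"
  shows "EB B {a, b, lmul a b}"
proof -
  have "\<exists>c. \<forall>i<4. ap (lmul a b) v $ i = c * v $ i" if v: "v \<in> B" for v
  proof -
    have h: "(\<exists>c. \<forall>i<4. ap a v $ i = c * v $ i) \<and> (\<exists>c. \<forall>i<4. ap b v $ i = c * v $ i)"
      using e v by (simp add: EB_def)
    obtain ca where ca: "\<forall>i<4. ap a v $ i = ca * v $ i" using h by blast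
    obtain cb where cb: "\<forall>i<4. ap b v $ i = cb * v $ i" using h by blast
    define w where "w = om (fst a) (fst b) * om (snd a) (snd b)"
    have wnz: "w \<noteq> 0" using om_nz[of "fst a" "fst b"] om_nz[of "snd a" "snd b"] unfolding w_def by (metis mult_eq_0_iff)
    have "\<forall>i<4. ap (lmul a b) v $ i = (ca * cb / w) * v $ i"
    proof (intro allI impI)
      fix i :: nat assume i: "i < 4"
      have e1: "ap a (ap b v) $ i = w * ap (lmul a b) v $ i" unfolding w_def by (rule ap_lmul[OF i])
      have e2: "ap a (ap b v) $ i = cb * ap a v $ i" using ap_lin[of "ap b v" cb v i a] cb i by blast
      have e3: "ap a v $ i = ca * v $ i" using ca i by blast
      have "w * ap (lmul a b) v $ i = cb * (ca * v $ i)" using e1 e2 e3 by simp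
      hence "ap (lmul a b) v $ i = cb * (ca * v $ i) / w" using wnz by (simp add: eq_divide_eq mult.commute)
      thus "ap (lmul a b) v $ i = (ca * cb / w) * v $ i" by simp
    qed
    thus ?thesis by blast
  qed
  thus ?thesis using e by (auto simp: EB_def)
qed

lemma EB_cls: "cls R \<Longrightarrow> \<exists>B. EB B R"
proof -
  assume c: "cls R"
  from c obtain a b d where R: "R = {a,b,d}" "a \<noteq> b" "b \<noteq> d" "a \<noteq> d"
    by (auto simp: cls_def card_3_iff)
  have sub: "R \<subseteq> NI" and lc: "\<forall>u\<in>R. \<forall>v\<in>R. lcomm u v" using c by (auto simp: cls_def)
  have dm: "d = lmul a b" by (rule K) (use R sub lc in auto)
  have ab: "a \<in> NI" "b \<in> NI" "lcomm a b" using R sub lc by auto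
  have "\<exists>B. EB B {a, b}"
    using pairs[OF ab(1,2) R(2) ab(3)]
    apply - apply (elim disjE) apply (rule exI, (erule EB_mono[OF EB0] | erule EB_mono[OF EB1] | erule EB_mono[OF EB2] | erule EB_mono[OF EB3] | erule EB_mono[OF EB4] | erule EB_mono[OF EB5] | erule EB_mono[OF EB6] | erule EB_mono[OF EB7] | erule EB_mono[OF EB8] | erule EB_mono[OF EB9] | erule EB_mono[OF EB10] | erule EB_mono[OF EB11] | erule EB_mono[OF EB12] | erule EB_mono[OF EB13] | erule EB_mono[OF EB14]))+
    done
  then obtain B where "EB B {a, b}" by blast
  hence "EB B {a, b, lmul a b}" by (rule EB_close)
  thus ?thesis using R dm by blast
qed

lemma EB_ceb: "EB B L \<Longrightarrow> common_eigenbasis (M ` L) B"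
proof -
  assume e: "EB B L"
  have o: "onb4 B" using e by (simp add: EB_def)
  have "eigenvector (M y) v" if v: "v \<in> B" and y: "y \<in> L" for v y
  proof -
    have d: "dim_vec v = 4" and n: "braket v v = 1" using o v by (auto simp: onb4_def)
    have "\<exists>c. \<forall>i<4. ap y v $ i = c * v $ i" using e v y unfolding EB_def by blast
    then obtain c where c: "\<forall>i<4. ap y v $ i = c * v $ i" by blast
    have "M y *\<^sub>v v = c \<cdot>\<^sub>v v" unfolding M_v[OF d]
      by (rule eq_vecI) (use c d in auto)
    moreover have "v \<noteq> 0\<^sub>v 4"
    proof
      assume z: "v = 0\<^sub>v 4"
      have "braket v v = 0" unfolding z by (simp add: braket_def)
      thus False using n by simp
    qed
    hence "v \<noteq> 0\<^sub>v (dim_vec v)" using d by simp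
    ultimately show ?thesis by (auto simp: eigenvector_def)
  qed
  thus ?thesis using o by (auto simp: common_eigenbasis_def)
qed

lemma not_unb_self: "onb4 B \<Longrightarrow> \<not> unbiased B B"
proof
  assume o: "onb4 B" and u: "unbiased B B"
  have "B \<noteq> {}" using o by (auto simp: onb4_def)
  then obtain a where a: "a \<in> B" by blast
  have "braket a a = 1" using o a by (simp add: onb4_def)
  moreover have "cmod (braket a a) = 1 / sqrt 4" using u a by (simp add: unbiased_def)
  ultimately show False by simp
qed

theorem theorem2:
  assumes "complete_set F" and "C1 \<in> F" and "C2 \<in> F" and "C1 \<noteq> C2"
  shows "\<not> (\<exists>C3 C4 B1 B2 B3 B4.
            max_comm_class C3 \<and> max_comm_class C4 \<and>
            C1 \<inter> C3 = {} \<and> C1 \<inter> C4 = {} \<and> C2 \<inter> C3 = {} \<and>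
            C2 \<inter> C4 = {} \<and> C3 \<inter> C4 = {} \<and>
            common_eigenbasis C1 B1 \<and> common_eigenbasis C2 B2 \<and>
            common_eigenbasis C3 B3 \<and> common_eigenbasis C4 B4 \<and>
            unbiased B1 B2 \<and> unbiased B1 B3 \<and> unbiased B1 B4 \<and>
            unbiased B2 B3 \<and> unbiased B2 B4 \<and> unbiased B3 B4 \<and>
            weakly_unextendible {B1, B2, B3, B4})"
proof
  assume "\<exists>C3 C4 B1 B2 B3 B4.
            max_comm_class C3 \<and> max_comm_class C4 \<and>
            C1 \<inter> C3 = {} \<and> C1 \<inter> C4 = {} \<and> C2 \<inter> C3 = {} \<and>
            C2 \<inter> C4 = {} \<and> C3 \<inter> C4 = {} \<and>
            common_eigenbasis C1 B1 \<and> common_eigenbasis C2 B2 \<and>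
            common_eigenbasis C3 B3 \<and> common_eigenbasis C4 B4 \<and>
            unbiased B1 B2 \<and> unbiased B1 B3 \<and> unbiased B1 B4 \<and>
            unbiased B2 B3 \<and> unbiased B2 B4 \<and> unbiased B3 B4 \<and>
            weakly_unextendible {B1, B2, B3, B4}"
  then obtain C3 C4 B1 B2 B3 B4 where
    m34: "max_comm_class C3" "max_comm_class C4" and
    dj: "C1 \<inter> C3 = {}" "C1 \<inter> C4 = {}" "C2 \<inter> C3 = {}" "C2 \<inter> C4 = {}" "C3 \<inter> C4 = {}" and
    ce: "common_eigenbasis C1 B1" "common_eigenbasis C2 B2" "common_eigenbasis C3 B3" "common_eigenbasis C4 B4" and
    wu: "weakly_unextendible {B1, B2, B3, B4}"
    by blast
  have m12: "max_comm_class C1" "max_comm_class C2" using assms by (auto simp: complete_set_def)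
  have dj12: "C1 \<inter> C2 = {}" using assms by (auto simp: complete_set_def)
  define L1 where "L1 = {x \<in> NI. M x \<in> C1}"
  define L2 where "L2 = {x \<in> NI. M x \<in> C2}"
  define L3 where "L3 = {x \<in> NI. M x \<in> C3}"
  define L4 where "L4 = {x \<in> NI. M x \<in> C4}"
  have c1: "cls L1" "C1 = M ` L1" using class_lab[OF m12(1)] unfolding L1_def[symmetric] by blast+
  have c2: "cls L2" "C2 = M ` L2" using class_lab[OF m12(2)] unfolding L2_def[symmetric] by blast+
  have c3: "cls L3" "C3 = M ` L3" using class_lab[OF m34(1)] unfolding L3_def[symmetric] by blast+
  have c4: "cls L4" "C4 = M ` L4" using class_lab[OF m34(2)] unfolding L4_def[symmetric] by blast+
  have d: "L1 \<inter> L2 = {}" "L1 \<inter> L3 = {}" "L1 \<inter> L4 = {}" "L2 \<inter> L3 = {}" "L2 \<inter> L4 = {}" "L3 \<inter> L4 = {}"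
    using dj dj12 c1 c2 c3 c4 disj_lab by metis+
  define R where "R = NI - (L1 \<union> L2 \<union> L3 \<union> L4)"
  have cR: "cls R" unfolding R_def by (rule compl[OF c1(1) c2(1) c3(1) c4(1) d])
  obtain B where EBR: "EB B R" using EB_cls[OF cR] by blast
  have ceB: "common_eigenbasis (M ` R) B" by (rule EB_ceb[OF EBR])
  have dR: "R \<inter> L1 = {}" "R \<inter> L2 = {}" "R \<inter> L3 = {}" "R \<inter> L4 = {}" by (auto simp: R_def)
  have u: "unbiased B B1" "unbiased B B2" "unbiased B B3" "unbiased B B4"
    using unbiased_of[OF cR c1(1) dR(1) ceB] unbiased_of[OF cR c2(1) dR(2) ceB]
      unbiased_of[OF cR c3(1) dR(3) ceB] unbiased_of[OF cR c4(1) dR(4) ceB] ce c1(2) c2(2) c3(2) c4(2)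
    by auto
  have oB: "onb4 B" using EBR by (simp add: EB_def)
  have nin: "B \<notin> {B1, B2, B3, B4}" using u not_unb_self[OF oB] by auto
  have mR: "max_comm_class (M ` R)"
  proof -
    have "card (M ` R) = card R" by (rule card_image) (meson M_inj inj_on_subset subset_UNIV)
    moreover have "M ` R \<subseteq> nonid_paulis" using cR by (auto simp: nonid_M cls_def)
    moreover have "\<forall>A\<in>M ` R. \<forall>B\<in>M ` R. commute A B" using cR by (auto simp: cls_def commute_iff)
    ultimately show ?thesis using cR by (simp add: max_comm_class_def cls_def)
  qed
  show False using wu mR ceB nin u unfolding weakly_unextendible_def by blast
qed


end
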